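(* Let $v_1,\dots,v_m\in\mathbb{Q}^n$ and $P=P_{v_1,\dots,v_m}$. Let $w\in\sum_{i=1}^m\mathbb{Q}_Pv_i$, and suppose there exist a natural number $k$ none of whose prime factors lies in $P$ and a subset $I\subseteq\{1,\dots,m\}$ such that $kw\in\sum_{i\in I}\mathbb{Q}_Pv_i$. Then $w\in\sum_{i\in I}\mathbb{Q}_Pv_i$.
   Context: An elementary integral relation among $v_1,\dots,v_m$ is a relation $\sum_{i=1}^m a_iv_i=0$ with $a_i\in\mathbb{Z}$ not all zero, whose support $\{i:a_i\neq0\}$ is minimal (inclusion-wise) among supports of nontrivial linear relations, and whose coefficients have greatest common divisor $1$. $P_{v_1,\dots,v_m}$ is the (finite) set of primes $p$ for which there exists an elementary integral relation $\sum a_iv_i=0$ with $p\mid\prod_{a_i\neq0}a_i$. For a set of primes $P$, $\mathbb{Q}_P=\{a/b: a,b\in\mathbb{Z},\ b\neq0,\ \text{all prime factors of } b \text{ lie in } P\}$ (so $\mathbb{Q}_\emptyset=\mathbb{Z}$). *)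

theory Defs
  imports Complex_Main "HOL-Computational_Algebra.Primes"
begin

text \<open>Vectors in Q^n are functions from a finite index type 'n to rat.
  The family v_1,...,v_m is a function v :: nat => 'n => rat, used on {1..m}.\<close>

definition lin_comb :: "(nat \<Rightarrow> 'n \<Rightarrow> rat) \<Rightarrow> (nat \<Rightarrow> rat) \<Rightarrow> nat set \<Rightarrow> 'n \<Rightarrow> rat" where
  "lin_comb v c I = (\<lambda>j. \<Sum>i\<in>I. c i * v i j)"

definition is_relation_support :: "(nat \<Rightarrow> 'n \<Rightarrow> rat) \<Rightarrow> nat \<Rightarrow> nat set \<Rightarrow> bool" where
  "is_relation_support v m S \<longleftrightarrow> S \<subseteq> {1..m} \<and> S \<noteq> {} \<and>
     (\<exists>a::nat \<Rightarrow> rat. (\<forall>i\<in>S. a i \<noteq> 0) \<and> lin_comb v a S = (\<lambda>_. 0))"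

definition int_support :: "nat \<Rightarrow> (nat \<Rightarrow> int) \<Rightarrow> nat set" where
  "int_support m a = {i\<in>{1..m}. a i \<noteq> 0}"

definition elementary_integral_relation :: "(nat \<Rightarrow> 'n \<Rightarrow> rat) \<Rightarrow> nat \<Rightarrow> (nat \<Rightarrow> int) \<Rightarrow> bool" where
  "elementary_integral_relation v m a \<longleftrightarrow>
     int_support m a \<noteq> {} \<and>
     lin_comb v (\<lambda>i. of_int (a i)) {1..m} = (\<lambda>_. 0) \<and>
     (\<forall>T. T \<subset> int_support m a \<longrightarrow> \<not> is_relation_support v m T) \<and>
     Gcd (a ` {1..m}) = 1"

definition P_primes :: "(nat \<Rightarrow> 'n \<Rightarrow> rat) \<Rightarrow> nat \<Rightarrow> nat set" where
  "P_primes v m = {p. prime p \<and> (\<exists>a. elementary_integral_relation v m a \<and>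
       int p dvd (\<Prod>i\<in>int_support m a. a i))}"

definition Q_loc :: "nat set \<Rightarrow> rat set" where
  "Q_loc P = {q. \<exists>a b::int. b \<noteq> 0 \<and> q = of_int a / of_int b \<and>
                  (\<forall>p::nat. prime p \<and> int p dvd b \<longrightarrow> p \<in> P)}"

definition QP_span :: "nat set \<Rightarrow> (nat \<Rightarrow> 'n \<Rightarrow> rat) \<Rightarrow> nat set \<Rightarrow> ('n \<Rightarrow> rat) set" where
  "QP_span P v I = {lin_comb v c I | c. \<forall>i\<in>I. c i \<in> Q_loc P}"

end

theory Submission
  imports Defs
begin

lemma Qloc_int: "of_int z \<in> Q_loc P"
  unfolding Q_loc_def by (rule CollectI, rule exI[of _ z], rule exI[of _ 1]) auto

lemma Qloc_mult: assumes "x \<in> Q_loc P" "y \<in> Q_loc P" shows "x * y \<in> Q_loc P"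
proof -
  obtain a b where ab: "b \<noteq> 0" "x = of_int a / of_int b" "\<forall>p::nat. prime p \<and> int p dvd b \<longrightarrow> p \<in> P"
    using assms(1) unfolding Q_loc_def by blast
  obtain c d where cd: "d \<noteq> 0" "y = of_int c / of_int d" "\<forall>p::nat. prime p \<and> int p dvd d \<longrightarrow> p \<in> P"
    using assms(2) unfolding Q_loc_def by blast
  have "\<forall>p::nat. prime p \<and> int p dvd (b*d) \<longrightarrow> p \<in> P"
  proof (intro allI impI)
    fix p :: nat assume h: "prime p \<and> int p dvd (b*d)"
    then have "prime (int p)" by simp
    then have "int p dvd b \<or> int p dvd d" using h prime_dvd_mult_iff by blast
    then show "p \<in> P" using ab cd h by blast
  qed
  moreover have "x * y = of_int (a*c) / of_int (b*d)" using ab cd by simp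
  ultimately show ?thesis unfolding Q_loc_def using ab cd
    by (intro CollectI exI[of _ "a*c"] exI[of _ "b*d"]) auto
qed

lemma Qloc_add: assumes "x \<in> Q_loc P" "y \<in> Q_loc P" shows "x + y \<in> Q_loc P"
proof -
  obtain a b where ab: "b \<noteq> 0" "x = of_int a / of_int b" "\<forall>p::nat. prime p \<and> int p dvd b \<longrightarrow> p \<in> P"
    using assms(1) unfolding Q_loc_def by blast
  obtain c d where cd: "d \<noteq> 0" "y = of_int c / of_int d" "\<forall>p::nat. prime p \<and> int p dvd d \<longrightarrow> p \<in> P"
    using assms(2) unfolding Q_loc_def by blast
  have "\<forall>p::nat. prime p \<and> int p dvd (b*d) \<longrightarrow> p \<in> P"
  proof (intro allI impI)
    fix p :: nat assume h: "prime p \<and> int p dvd (b*d)"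
    then have "prime (int p)" by simp
    then have "int p dvd b \<or> int p dvd d" using h prime_dvd_mult_iff by blast
    then show "p \<in> P" using ab cd h by blast
  qed
  moreover have "x + y = of_int (a*d + c*b) / of_int (b*d)" using ab cd by (simp add: field_simps)
  ultimately show ?thesis unfolding Q_loc_def using ab cd
    by (intro CollectI exI[of _ "a*d + c*b"] exI[of _ "b*d"]) auto
qed

lemma Qloc_neg: assumes "x \<in> Q_loc P" shows "- x \<in> Q_loc P"
  using Qloc_mult[OF Qloc_int[of "-1"] assms] by simp

lemma Qloc_diff: assumes "x \<in> Q_loc P" "y \<in> Q_loc P" shows "x - y \<in> Q_loc P"
  using Qloc_add[OF assms(1) Qloc_neg[OF assms(2)]] by simp

lemma Qloc_inv: assumes "a \<noteq> 0" "\<forall>p::nat. prime p \<and> int p dvd a \<longrightarrow> p \<in> P"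
  shows "1 / of_int a \<in> Q_loc P"
  unfolding Q_loc_def using assms by (intro CollectI exI[of _ 1] exI[of _ a]) auto

lemma common_denom: "finite A \<Longrightarrow> \<exists>D::int. D > 0 \<and> (\<forall>q\<in>A. q * of_int D \<in> (\<int>::rat set))"
proof (induction A rule: finite_induct)
  case empty then show ?case by (intro exI[of _ 1]) auto
next
  case (insert x A)
  then obtain D where D: "D > 0" "\<forall>q\<in>A. q * of_int D \<in> (\<int>::rat set)" by blast
  obtain n d where nd: "quotient_of x = (n, d)" by (cases "quotient_of x")
  have dpos: "d > 0" using quotient_of_denom_pos[OF nd] .
  have xd: "x * of_int d = of_int n" using quotient_of_div[OF nd] dpos by simp
  show ?case
  proof (intro exI[of _ "D*d"] conjI ballI)
    show "D * d > 0" using D dpos by simp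
    fix q assume "q \<in> insert x A"
    then show "q * of_int (D*d) \<in> \<int>"
    proof
      assume "q = x" then have "q * of_int (D*d) = (x * of_int d) * of_int D"
        by (simp add: algebra_simps)
      also have "\<dots> = of_int (n * D)" using xd by simp
      finally show ?thesis by (metis Ints_of_int)
    next
      assume "q \<in> A" then have "q * of_int D \<in> \<int>" using D by blast
      then obtain z where "q * of_int D = of_int z" by (auto elim: Ints_cases)
      then have "q * of_int (D*d) = of_int (z*d)" by (simp add: mult.assoc[symmetric])
      then show ?thesis by (metis Ints_of_int)
    qed
  qed
qed

lemma exists_elementary:
  fixes v :: "nat \<Rightarrow> 'n \<Rightarrow> rat"
  assumes rel: "lin_comb v s {1..m} = (\<lambda>_. 0)" and Sdef: "S = {i\<in>{1..m}. s i \<noteq> 0}" and Sne: "S \<noteq> {}"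
  shows "\<exists>a. elementary_integral_relation v m a \<and> int_support m a \<subseteq> S"
proof -
  define RS where "RS = {T. T \<subseteq> S \<and> is_relation_support v m T}"
  have finS: "finite S" using Sdef by simp
  have "lin_comb v s S = lin_comb v s {1..m}"
    unfolding lin_comb_def by (rule ext, rule sum.mono_neutral_left) (auto simp: Sdef)
  then have "S \<in> RS" unfolding RS_def is_relation_support_def using rel Sne
    by (auto simp: Sdef intro!: exI[of _ s])
  then obtain C where C: "C \<in> RS" and Cmin: "\<forall>T. T \<in> RS \<longrightarrow> card C \<le> card T"
    using ex_has_least_nat[of "\<lambda>T. T \<in> RS" S card] by blast
  have CS: "C \<subseteq> S" and Crs: "is_relation_support v m C" using C RS_def by auto
  have finC: "finite C" using CS finS finite_subset by blast
  have Cmin': "\<And>T. T \<subset> C \<Longrightarrow> \<not> is_relation_support v m T"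
  proof
    fix T assume "T \<subset> C" "is_relation_support v m T"
    then have "T \<in> RS" using CS RS_def by auto
    then have "card C \<le> card T" using Cmin by blast
    moreover have "card T < card C" using \<open>T \<subset> C\<close> finC psubset_card_mono by blast
    ultimately show False by simp
  qed
  obtain b where Cm: "C \<subseteq> {1..m}" and Cne: "C \<noteq> {}" and bnz: "\<forall>i\<in>C. b i \<noteq> 0"
     and brel: "lin_comb v b C = (\<lambda>_. 0)"
    using Crs unfolding is_relation_support_def by blast
  obtain D :: int where Dpos: "D > 0" and DI: "\<forall>q\<in>b ` C. q * of_int D \<in> (\<int>::rat set)"
    using common_denom[of "b ` C"] finC by blast
  have "\<forall>i\<in>C. \<exists>z. b i * of_int D = of_int z" using DI by (auto elim!: Ints_cases)
  then obtain f where f: "\<And>i. i \<in> C \<Longrightarrow> b i * of_int D = of_int (f i)" by metis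
  define a0 where "a0 i = (if i \<in> C then f i else 0)" for i
  have a0nz: "a0 i \<noteq> 0" if "i \<in> C" for i
  proof
    assume "a0 i = 0" then have "b i * of_int D = 0" using f[OF that] that a0_def by simp
    then show False using bnz that Dpos by simp
  qed
  define g where "g = Gcd (a0 ` {1..m})"
  obtain i0 where i0: "i0 \<in> C" using Cne by blast
  have gnz: "g \<noteq> 0" unfolding g_def using a0nz[OF i0] i0 Cm Gcd_0_iff by (metis image_eqI insert_subset singleton_iff subsetD subsetI)
  have gpos: "g > 0" using gnz g_def Gcd_int_greater_eq_0 by (metis order_neq_le_trans)
  define a where "a i = a0 i div g" for i
  have a0a: "a0 i = g * a i" if "i \<in> {1..m}" for i
    unfolding a_def g_def using that by (simp add: Gcd_dvd)
  have img: "a0 ` {1..m} = (*) g ` (a ` {1..m})" using a0a by (auto simp: image_iff)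
  have "g = normalize (g * Gcd (a ` {1..m}))" using img Gcd_mult[of g "a ` {1..m}"] g_def by simp
  also have "\<dots> = g * Gcd (a ` {1..m})" using gpos by (simp add: abs_mult)
  finally have gcd1: "Gcd (a ` {1..m}) = 1" using gnz by simp
  have supp: "int_support m a = C"
  proof -
    have "a i \<noteq> 0 \<longleftrightarrow> i \<in> C" if "i \<in> {1..m}" for i
      using a0a[OF that] a0nz gnz a0_def by (cases "i \<in> C") auto
    then show ?thesis unfolding int_support_def using Cm by (auto simp del: One_nat_def) (meson Cm atLeastAtMost_iff subsetD)
  qed
  have aval: "of_int (a i) = b i * (of_int D / of_int g)" if "i \<in> C" for i
  proof -
    have "of_int g * of_int (a i) = (of_int (a0 i) :: rat)" using a0a that Cm by (metis subsetD of_int_mult)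
    also have "\<dots> = b i * of_int D" using f that a0_def by simp
    finally show ?thesis using gnz by (simp add: field_simps)
  qed
  have lc: "lin_comb v (\<lambda>i. of_int (a i)) {1..m} = (\<lambda>_. 0)"
  proof
    fix j
    have "(\<Sum>i\<in>{1..m}. of_int (a i) * v i j) = (\<Sum>i\<in>C. of_int (a i) * v i j)"
      by (rule sum.mono_neutral_right) (use Cm supp int_support_def in auto)
    also have "\<dots> = (of_int D / of_int g) * (\<Sum>i\<in>C. b i * v i j)"
      by (simp add: sum_distrib_left aval mult_ac)
    also have "\<dots> = 0" using fun_cong[OF brel, of j] unfolding lin_comb_def by simp
    finally show "lin_comb v (\<lambda>i. of_int (a i)) {1..m} j = 0" unfolding lin_comb_def by simp
  qed
  have "elementary_integral_relation v m a"
    unfolding elementary_integral_relation_def using supp Cne lc Cmin' gcd1 by auto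
  then show ?thesis using supp CS by blast
qed

lemma key:
  fixes v :: "nat \<Rightarrow> 'n \<Rightarrow> rat"
  shows "card {i\<in>{1..m}. s i \<noteq> 0} = n \<Longrightarrow> lin_comb v s {1..m} = (\<lambda>_. 0) \<Longrightarrow>
    (\<forall>i\<in>{1..m}-I. s i \<in> Q_loc (P_primes v m)) \<Longrightarrow>
    \<exists>y. lin_comb v y {1..m} = (\<lambda>_. 0) \<and> (\<forall>i\<in>{1..m}. y i \<in> Q_loc (P_primes v m))
        \<and> (\<forall>i\<in>{1..m}-I. y i = s i)"
proof (induction n arbitrary: s rule: less_induct)
  case (less n)
  define P where "P = P_primes v m"
  define S where "S = {i\<in>{1..m}. s i \<noteq> 0}"
  show ?case
  proof (cases "S = {}")
    case True
    have "lin_comb v (\<lambda>_. 0) {1..m} = (\<lambda>_. 0)" unfolding lin_comb_def by simp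
    moreover have "(0::rat) \<in> Q_loc P" using Qloc_int[of 0 P] by simp
    ultimately show ?thesis using True unfolding S_def P_def by (intro exI[of _ "\<lambda>_. 0"]) auto
  next
    case False
    obtain a where ea: "elementary_integral_relation v m a" and aS: "int_support m a \<subseteq> S"
      using exists_elementary[OF less.prems(2) S_def False] by blast
    define A where "A = int_support m a"
    have Ane: "A \<noteq> {}" and arel: "lin_comb v (\<lambda>i. of_int (a i)) {1..m} = (\<lambda>_. 0)"
      using ea unfolding elementary_integral_relation_def A_def by auto
    have Am: "A \<subseteq> {1..m}" unfolding A_def int_support_def by auto
    have anz: "a j \<noteq> 0" if "j \<in> A" for j using that unfolding A_def int_support_def by auto
    have azero: "a i = 0" if "i \<in> {1..m}" "i \<notin> A" for i using that unfolding A_def int_support_def by auto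
    have ainv: "1 / of_int (a j) \<in> Q_loc P" if "j \<in> A" for j
    proof (rule Qloc_inv[OF anz[OF that]], intro allI impI)
      fix p :: nat assume h: "prime p \<and> int p dvd a j"
      have "a j dvd (\<Prod>i\<in>A. a i)" using that Am by (intro dvd_prodI) (auto intro: finite_subset)
      then have "int p dvd (\<Prod>i\<in>int_support m a. a i)" using h A_def dvd_trans by blast
      then show "p \<in> P" unfolding P_def P_primes_def using h ea by blast
    qed
    have reduce: "\<exists>y. lin_comb v y {1..m} = (\<lambda>_. 0) \<and> (\<forall>i\<in>{1..m}. y i \<in> Q_loc P)
        \<and> (\<forall>i\<in>{1..m}-I. y i = s i - t * of_int (a i))"
      if jA: "j \<in> A" and tdef: "t = s j / of_int (a j)"
        and hyp: "\<forall>i\<in>{1..m}-I. s i - t * of_int (a i) \<in> Q_loc P" for j t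
    proof -
      define s' where "s' i = s i - t * of_int (a i)" for i
      have rel': "lin_comb v s' {1..m} = (\<lambda>_. 0)"
      proof
        fix x
        have "lin_comb v s' {1..m} x = lin_comb v s {1..m} x - t * lin_comb v (\<lambda>i. of_int (a i)) {1..m} x"
          unfolding lin_comb_def s'_def by (simp add: algebra_simps sum_subtractf sum_distrib_left)
        then show "lin_comb v s' {1..m} x = 0" using less.prems(2) arel by simp
      qed
      have sub: "{i\<in>{1..m}. s' i \<noteq> 0} \<subseteq> S - {j}"
      proof
        fix i assume i: "i \<in> {i\<in>{1..m}. s' i \<noteq> 0}"
        have "i \<noteq> j" using i anz[OF jA] tdef s'_def by auto
        moreover have "s i \<noteq> 0"
        proof
          assume "s i = 0"
          then have "i \<notin> A" using aS A_def S_def by auto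
          then have "s' i = 0" using azero i s'_def \<open>s i = 0\<close> by simp
          then show False using i by simp
        qed
        ultimately show "i \<in> S - {j}" using i S_def by auto
      qed
      have "j \<in> S" using jA aS A_def by auto
      then have "card (S - {j}) < card S" using S_def by (intro card_Diff1_less) auto
      moreover have "card {i\<in>{1..m}. s' i \<noteq> 0} \<le> card (S - {j})"
        using sub S_def by (intro card_mono) auto
      ultimately have "card {i\<in>{1..m}. s' i \<noteq> 0} < n" using less.prems(1) S_def by simp
      from less.IH[OF this refl rel'] hyp show ?thesis unfolding s'_def P_def by auto
    qed
    show ?thesis
    proof (cases "\<exists>j\<in>A. j \<notin> I")
      case True
      then obtain j where jA: "j \<in> A" and jI: "j \<notin> I" by blast
      define t where "t = s j / of_int (a j)"
      have "s j \<in> Q_loc P" using less.prems(3) jI jA Am P_def by auto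
      then have tQ: "t \<in> Q_loc P" using Qloc_mult[OF _ ainv[OF jA]] t_def by (metis times_divide_eq_right mult_1_right)
      have "\<forall>i\<in>{1..m}-I. s i - t * of_int (a i) \<in> Q_loc P"
        using less.prems(3) tQ unfolding P_def by (auto intro!: Qloc_diff Qloc_mult Qloc_int)
      then obtain y where y: "lin_comb v y {1..m} = (\<lambda>_. 0)" "\<forall>i\<in>{1..m}. y i \<in> Q_loc P"
          "\<forall>i\<in>{1..m}-I. y i = s i - t * of_int (a i)"
        using reduce[OF jA t_def] by blast
      define y' where "y' i = y i + t * of_int (a i)" for i
      have "lin_comb v y' {1..m} = (\<lambda>_. 0)"
      proof
        fix x
        have "lin_comb v y' {1..m} x = lin_comb v y {1..m} x + t * lin_comb v (\<lambda>i. of_int (a i)) {1..m} x"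
          unfolding lin_comb_def y'_def by (simp add: algebra_simps sum.distrib sum_distrib_left)
        then show "lin_comb v y' {1..m} x = 0" using y(1) arel by simp
      qed
      moreover have "\<forall>i\<in>{1..m}. y' i \<in> Q_loc P" using y(2) unfolding y'_def
        by (auto intro!: Qloc_add Qloc_mult tQ Qloc_int)
      moreover have "\<forall>i\<in>{1..m}-I. y' i = s i" using y(3) unfolding y'_def by auto
      ultimately show ?thesis unfolding P_def by blast
    next
      case False
      obtain j where jA: "j \<in> A" using Ane by blast
      define t where "t = s j / of_int (a j)"
      have "\<forall>i\<in>{1..m}-I. s i - t * of_int (a i) \<in> Q_loc P"
        using less.prems(3) P_def False azero by auto
      then obtain y where y: "lin_comb v y {1..m} = (\<lambda>_. 0)" "\<forall>i\<in>{1..m}. y i \<in> Q_loc P"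
          "\<forall>i\<in>{1..m}-I. y i = s i - t * of_int (a i)"
        using reduce[OF jA t_def] by blast
      moreover have "\<forall>i\<in>{1..m}-I. y i = s i" using y(3) False azero by auto
      ultimately show ?thesis unfolding P_def by blast
    qed
  qed
qed

theorem mainTheorem5:
  fixes v :: "nat \<Rightarrow> 'n::finite \<Rightarrow> rat" and m k :: nat
    and w :: "'n \<Rightarrow> rat" and I :: "nat set"
  assumes "w \<in> QP_span (P_primes v m) v {1..m}"
    and "k > 0"
    and "\<forall>p. prime p \<and> p dvd k \<longrightarrow> p \<notin> P_primes v m"
    and "I \<subseteq> {1..m}"
    and "(\<lambda>j. of_nat k * w j) \<in> QP_span (P_primes v m) v I"
  shows "w \<in> QP_span (P_primes v m) v I"
proof -
  define P where "P = P_primes v m"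
  obtain c where wc: "w = lin_comb v c {1..m}" and cQ: "\<forall>i\<in>{1..m}. c i \<in> Q_loc P"
    using assms(1) unfolding QP_span_def P_def by blast
  obtain d where kw: "(\<lambda>j. of_nat k * w j) = lin_comb v d I"
    using assms(5) unfolding QP_span_def by blast
  define s where "s i = c i - (if i \<in> I then d i / of_nat k else 0)" for i
  have rel: "lin_comb v s {1..m} = (\<lambda>_. 0)"
  proof
    fix j
    have kj: "of_nat k * w j = (\<Sum>i\<in>I. d i * v i j)" using fun_cong[OF kw, of j] unfolding lin_comb_def by simp
    have "(\<Sum>i\<in>{1..m}. (if i \<in> I then d i / of_nat k else 0) * v i j) = (\<Sum>i\<in>I. d i / of_nat k * v i j)"
    proof -
      have "(\<Sum>i\<in>{1..m}. (if i \<in> I then d i / of_nat k else 0) * v i j) = (\<Sum>i\<in>{1..m}. if i \<in> I then d i / of_nat k * v i j else 0)"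
        by (rule sum.cong) auto
      also have "\<dots> = (\<Sum>i\<in>{1..m} \<inter> I. d i / of_nat k * v i j)" by (simp only: sum.inter_restrict finite_atLeastAtMost)
      also have "{1..m} \<inter> I = I" using assms(4) by blast
      finally show ?thesis .
    qed
    also have "\<dots> = (\<Sum>i\<in>I. d i * v i j) / of_nat k" by (simp add: sum_divide_distrib)
    also have "\<dots> = w j" using kj[symmetric] assms(2) by simp
    finally have e: "(\<Sum>i\<in>{1..m}. (if i \<in> I then d i / of_nat k else 0) * v i j) = w j" .
    have "lin_comb v s {1..m} j = (\<Sum>i\<in>{1..m}. c i * v i j) - (\<Sum>i\<in>{1..m}. (if i \<in> I then d i / of_nat k else 0) * v i j)"
      unfolding lin_comb_def s_def by (simp add: algebra_simps sum_subtractf)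
    then show "lin_comb v s {1..m} j = 0" using e wc unfolding lin_comb_def by simp
  qed
  have "\<forall>i\<in>{1..m}-I. s i \<in> Q_loc (P_primes v m)" using cQ s_def P_def by auto
  then obtain y where y: "lin_comb v y {1..m} = (\<lambda>_. 0)" "\<forall>i\<in>{1..m}. y i \<in> Q_loc P"
     "\<forall>i\<in>{1..m}-I. y i = s i"
    using key[OF refl rel] P_def by blast
  define e where "e i = c i - y i" for i
  have "w = lin_comb v e I"
  proof
    fix j
    have "w j = (\<Sum>i\<in>{1..m}. c i * v i j) - (\<Sum>i\<in>{1..m}. y i * v i j)"
      using wc fun_cong[OF y(1), of j] unfolding lin_comb_def by simp
    also have "\<dots> = (\<Sum>i\<in>{1..m}. e i * v i j)" unfolding e_def by (simp add: algebra_simps sum_subtractf)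
    also have "\<dots> = (\<Sum>i\<in>I. e i * v i j)"
      by (rule sum.mono_neutral_right) (use assms(4) y(3) s_def e_def in auto)
    finally show "w j = lin_comb v e I j" unfolding lin_comb_def by simp
  qed
  moreover have "\<forall>i\<in>I. e i \<in> Q_loc P" using assms(4) cQ y(2) e_def by (auto intro!: Qloc_diff)
  ultimately show ?thesis unfolding QP_span_def P_def by blast
qed

end
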